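(* Let $d\ge3$, let $V$ be a $d\times d$ correlation matrix (symmetric positive semi-definite with unit diagonal), let $X=(X_1,\dots,X_d)\sim N(0,V)$, and let $h(x)=\max_{1\le i\le d}x_i$. Then $E(h(X)^2)\le 6\ln d$ and $\mathrm{Var}(h(X))\ge d^{-15}/\sqrt{2\pi}$. *)

theory Defs
  imports "HOL-Probability.Probability"
begin

definition correlation_matrix :: "nat \<Rightarrow> (nat \<Rightarrow> nat \<Rightarrow> real) \<Rightarrow> bool" where
  "correlation_matrix d V \<longleftrightarrow>
     (\<forall>i<d. \<forall>j<d. V i j = V j i) \<and>
     (\<forall>t::nat \<Rightarrow> real. 0 \<le> (\<Sum>i<d. \<Sum>j<d. t i * V i j * t j)) \<and>
     (\<forall>i<d. V i i = 1)"

definition centered_normal :: "real \<Rightarrow> real measure" where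
  "centered_normal s = (if s = 0 then return borel 0
                        else density lborel (normal_density 0 (sqrt s)))"

text \<open>X = (X_0,...,X_{d-1}) on M is N(0,V): every component is a real random
  variable, and every linear combination t.X is N(0, t^T V t)
  (standard definition of a possibly degenerate Gaussian vector).\<close>
definition gaussian_vector ::
  "'a measure \<Rightarrow> nat \<Rightarrow> (nat \<Rightarrow> nat \<Rightarrow> real) \<Rightarrow> (nat \<Rightarrow> 'a \<Rightarrow> real) \<Rightarrow> bool" where
  "gaussian_vector M d V X \<longleftrightarrow>
     (\<forall>i<d. X i \<in> borel_measurable M) \<and>
     (\<forall>t::nat \<Rightarrow> real.
        distr M borel (\<lambda>\<omega>. \<Sum>i<d. t i * X i \<omega>)
          = centered_normal (\<Sum>i<d. \<Sum>j<d. t i * V i j * t j))"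

end

theory Submission imports Defs begin

lemma marg:
  assumes "correlation_matrix d V" "gaussian_vector M d V X" "i < d"
  shows "distr M borel (X i) = density lborel (normal_density 0 1)"
proof -
  define t where "t = (\<lambda>k::nat. if k = i then 1 else (0::real))"
  have 1: "(\<lambda>\<omega>. \<Sum>k<d. t k * X k \<omega>) = X i"
  proof -
    have "\<And>k \<omega>. t k * X k \<omega> = (if k = i then X i \<omega> else 0)" by (simp add: t_def)
    then show ?thesis using assms(3) by (simp add: fun_eq_iff)
  qed
  have 2: "(\<Sum>k<d. \<Sum>j<d. t k * V k j * t j) = 1"
  proof -
    have "\<And>k j. t k * V k j * t j = (if k = i \<and> j = i then V i i else 0)" by (simp add: t_def)
    then have "\<And>k. (\<Sum>j<d. t k * V k j * t j) = (if k = i then V i i else 0)"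
      using assms(3) by (simp add: if_distrib[symmetric] sum.delta cong: if_cong) 
    then show ?thesis using assms(1,3) by (simp add: correlation_matrix_def)
  qed
  from assms(2) have "distr M borel (\<lambda>\<omega>. \<Sum>k<d. t k * X k \<omega>) = centered_normal (\<Sum>k<d. \<Sum>j<d. t k * V k j * t j)"
    unfolding gaussian_vector_def by blast
  then show ?thesis by (simp add: 1 2 centered_normal_def)
qed

lemma G_eq: "normal_density 0 1 x * exp (x\<^sup>2/4) = sqrt 2 * normal_density 0 (sqrt 2) x"
proof -
  have "exp (- x\<^sup>2 / 2) * exp (x\<^sup>2/4) = exp (- x\<^sup>2/4)" by (simp add: exp_add[symmetric])
  moreover have "sqrt 2 * (1 / sqrt (2 * pi * 2)) = 1 / sqrt (2 * pi)"
    by (simp add: real_sqrt_mult field_simps)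
  ultimately show ?thesis unfolding normal_density_def
    by (simp add: field_simps)
qed

lemma G_int: "integrable lborel (\<lambda>x. normal_density 0 1 x * exp (x\<^sup>2/4))"
  "(\<integral>x. normal_density 0 1 x * exp (x\<^sup>2/4) \<partial>lborel) = sqrt 2"
  unfolding G_eq by auto

lemma dens_lower:
  assumes "0 \<le> u"
  shows "measure (density lborel (normal_density 0 1)) {u..u+1} \<ge> normal_density 0 1 (u+1)"
proof -
  interpret N: prob_space "density lborel (normal_density 0 1)" by (rule prob_space_normal_density) simp
  have mono: "normal_density 0 1 (u+1) \<le> normal_density 0 1 x" if "x \<in> {u..u+1}" for x
  proof -
    have "x\<^sup>2 \<le> (u+1)\<^sup>2" using that assms by (intro power_mono) auto
    then show ?thesis unfolding normal_density_def by (simp add: divide_right_mono)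
  qed
  have "ennreal (normal_density 0 1 (u+1)) = (\<integral>\<^sup>+x. ennreal (normal_density 0 1 (u+1)) * indicator {u..u+1} x \<partial>lborel)"
    by (subst nn_integral_cmult_indicator) auto
  also have "\<dots> \<le> (\<integral>\<^sup>+x. ennreal (normal_density 0 1 x) * indicator {u..u+1} x \<partial>lborel)"
    by (intro nn_integral_mono) (auto simp: indicator_def mono)
  also have "\<dots> = emeasure (density lborel (normal_density 0 1)) {u..u+1}"
    by (simp add: emeasure_density)
  also have "\<dots> = ennreal (measure (density lborel (normal_density 0 1)) {u..u+1})"
    by (simp add: N.emeasure_eq_measure)
  finally show ?thesis by (simp add: ennreal_le_iff)
qed

lemma arith_final:
  fixes d :: nat
  assumes d: "d \<ge> 3"
  defines "a \<equiv> 2 * sqrt (ln (3 * real d))"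
  shows "real d powr (-15) / sqrt (2 * pi) \<le> (1/4) * normal_density 0 1 (a+2)"
    and "real d powr (-15) / sqrt (2 * pi) \<le> 1/8"
proof -
  define q where "q = real d"
  have q3: "q \<ge> 3" using d by (simp add: q_def)
  define L where "L = ln (3*q)"
  have L0: "L \<ge> 0" using q3 by (simp add: L_def)
  have sL: "(sqrt L)\<^sup>2 = L" using L0 by simp
  have "(a+2)\<^sup>2 = 4*L + 8 * sqrt L + 4" unfolding a_def q_def[symmetric] L_def[symmetric]
    using L0 by (simp add: power2_eq_square algebra_simps sL[unfolded power2_eq_square])
  also have "\<dots> \<le> 8*L + 8"
  proof -
    have "0 \<le> (sqrt L - 1)\<^sup>2" by simp
    then show ?thesis using sL by (simp add: power2_eq_square algebra_simps)
  qed
  finally have sq: "(a+2)\<^sup>2/2 \<le> 4*L + 4" by simp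
  have eL: "exp (4*L) = (3*q)^4"
  proof -
    have "exp (4*L) = exp L ^ 4" by (metis exp_of_nat_mult of_nat_numeral)
    moreover have "exp L = 3*q" using q3 unfolding L_def by simp
    ultimately show ?thesis by simp
  qed
  have e4: "exp (4::real) \<le> 81"
  proof -
    have "exp (4::real) = exp 1 ^ 4" by (metis exp_of_nat_mult mult.right_neutral of_nat_numeral)
    also have "\<dots> \<le> 3^4" by (intro power_mono exp_le) auto
    finally show ?thesis by simp
  qed
  have h1: "exp (-(4*L+4)) \<le> exp (-((a+2)\<^sup>2/2))" using sq by simp
  have h2: "exp (-(4*L+4)) = 1 / (exp 4 * (3*q)^4)"
  proof -
    have "exp (-(4*L+4)) = 1 / exp (4*L+4)" by (metis exp_minus inverse_eq_divide)
    also have "exp (4*L+4) = exp 4 * (3*q)^4" by (simp add: exp_add eL)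
    finally show ?thesis .
  qed
  have lb: "1 / (81 * (3*q)^4) \<le> exp (-((a+2)\<^sup>2/2))"
  proof -
    have "1 / (81 * (3*q)^4) \<le> 1 / (exp 4 * (3*q)^4)"
      using e4 q3 by (intro divide_left_mono mult_right_mono mult_pos_pos) auto
    then have "1 / (81 * (3*q)^4) \<le> exp (-(4*L+4))" unfolding h2 .
    then show ?thesis using h1 by (rule order_trans)
  qed
  have pw: "q powr (-15) = 1 / q^15" using q3 by (simp add: powr_minus powr_realpow divide_inverse)
  have big: "4 * 81 * 81 * q^4 \<le> q^15"
  proof -
    have "(3::real)^11 \<le> q^11" using q3 by (intro power_mono) auto
    then have "4*81*81 \<le> q^11" by simp
    then have "4*81*81 * q^4 \<le> q^11 * q^4" using q3 by (intro mult_right_mono) auto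
    also have "\<dots> = q^15" by (simp add: power_add[symmetric])
    finally show ?thesis .
  qed
  have "1 / q^15 \<le> (1/4) * (1 / (81 * (3*q)^4))"
    using big q3 by (simp add: field_simps power_mult_distrib)
  also have "\<dots> \<le> (1/4) * exp (-((a+2)\<^sup>2/2))" using lb by simp
  finally have "1 / q^15 \<le> (1/4) * exp (-((a+2)\<^sup>2/2))" .
  then have g: "1 / q^15 / sqrt (2 * pi) \<le> ((1/4) * exp (-((a+2)\<^sup>2/2))) / sqrt (2 * pi)"
    by (intro divide_right_mono) auto
  have nd: "(1/4) * normal_density 0 1 (a+2) = ((1/4) * exp (-((a+2)\<^sup>2/2))) / sqrt (2 * pi)"
    by (simp add: normal_density_def)
  show "real d powr (-15) / sqrt (2 * pi) \<le> (1/4) * normal_density 0 1 (a+2)"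
    unfolding q_def[symmetric] pw nd by (rule g)
  have "1 / q^15 \<le> 1/8"
  proof -
    have "(8::real) \<le> 3^15" by simp
    also have "\<dots> \<le> q^15" using q3 by (intro power_mono) auto
    finally show ?thesis using q3 by (simp add: field_simps)
  qed
  moreover have "1 \<le> sqrt (2 * pi)" using pi_gt3 by simp
  ultimately show "real d powr (-15) / sqrt (2 * pi) \<le> 1/8"
    unfolding q_def[symmetric] pw
  proof -
    have "1 / q^15 / sqrt (2 * pi) \<le> 1 / q^15 / 1"
      using \<open>1 \<le> sqrt (2 * pi)\<close> q3 by (intro divide_left_mono) auto
    then show "1 / q^15 / sqrt (2 * pi) \<le> 1/8" using \<open>1 / q^15 \<le> 1/8\<close> by simp
  qed
qed

lemma min_helper:
  fixes pA pB T nd :: real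
  assumes f1: "T \<le> (1/4) * nd" and f2: "T \<le> 1/8" and PA: "nd \<le> pA" and PB: "1/2 \<le> pB"
  shows "T \<le> min pA pB / 4"
proof -
  have "T * 4 \<le> pA" using f1 PA by simp
  moreover have "T * 4 \<le> pB" using f2 PB by linarith
  ultimately have "T * 4 \<le> min (pA) (pB)" by simp
  then show ?thesis by simp
qed

theorem mainTheorem16:
  fixes M :: "'a measure" and d :: nat and V :: "nat \<Rightarrow> nat \<Rightarrow> real"
    and X :: "nat \<Rightarrow> 'a \<Rightarrow> real"
  assumes "prob_space M"
    and "d \<ge> 3"
    and "correlation_matrix d V"
    and "gaussian_vector M d V X"
  shows "prob_space.expectation M (\<lambda>\<omega>. (Max ((\<lambda>i. X i \<omega>) ` {..<d}))\<^sup>2) \<le> 6 * ln (real d) \<and>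
         prob_space.variance M (\<lambda>\<omega>. Max ((\<lambda>i. X i \<omega>) ` {..<d}))
           \<ge> real d powr (-15) / sqrt (2 * pi)"
proof -
  interpret P: prob_space M by (rule assms(1))
  have d0: "0 < d" using assms(2) by simp
  have Xm[measurable]: "\<And>i. i < d \<Longrightarrow> X i \<in> borel_measurable M"
    using assms(4) unfolding gaussian_vector_def by blast
  define Y where "Y = (\<lambda>\<omega>. Max ((\<lambda>i. X i \<omega>) ` {..<d}))"
  have Ym[measurable]: "Y \<in> borel_measurable M"
    unfolding Y_def by (rule borel_measurable_Max) (auto intro: Xm)
  have Yin: "\<exists>j<d. Y \<omega> = X j \<omega>" for \<omega>
  proof -
    have "Y \<omega> \<in> (\<lambda>i. X i \<omega>) ` {..<d}" unfolding Y_def using d0 by (intro Max_in) auto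
    then show ?thesis by auto
  qed
  have Yge: "X i \<omega> \<le> Y \<omega>" if "i < d" for i \<omega>
    unfolding Y_def using that by (intro Max_ge) auto
  have Ele: "integrable M (\<lambda>\<omega>. exp ((X i \<omega>)\<^sup>2/4)) \<and> P.expectation (\<lambda>\<omega>. exp ((X i \<omega>)\<^sup>2/4)) = sqrt 2"
    if i: "i < d" for i
  proof -
    have dist: "distr M borel (X i) = density lborel (normal_density 0 1)"
      by (rule marg[OF assms(3,4) i])
    have meas: "X i \<in> measurable M borel" using Xm[OF i] by simp
    have fm: "(\<lambda>x::real. exp (x\<^sup>2/4)) \<in> borel_measurable borel" by measurable
    have "integrable M (\<lambda>\<omega>. exp ((X i \<omega>)\<^sup>2/4)) \<longleftrightarrow> integrable (distr M borel (X i)) (\<lambda>x. exp (x\<^sup>2/4))"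
      by (rule integrable_distr_eq[OF meas fm, symmetric])
    also have "\<dots> \<longleftrightarrow> integrable lborel (\<lambda>x. normal_density 0 1 x * exp (x\<^sup>2/4))"
      unfolding dist by (subst integrable_density) auto
    finally have I: "integrable M (\<lambda>\<omega>. exp ((X i \<omega>)\<^sup>2/4))" using G_int(1) by simp
    have "P.expectation (\<lambda>\<omega>. exp ((X i \<omega>)\<^sup>2/4)) = integral\<^sup>L (distr M borel (X i)) (\<lambda>x. exp (x\<^sup>2/4))"
      by (rule integral_distr[OF meas fm, symmetric])
    also have "\<dots> = (\<integral>x. normal_density 0 1 x * exp (x\<^sup>2/4) \<partial>lborel)"
      unfolding dist by (subst integral_density) auto
    finally show ?thesis using I G_int(2) by simp
  qed
  define S where "S = (\<lambda>\<omega>. \<Sum>i<d. exp ((X i \<omega>)\<^sup>2/4))"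
  have Sint: "integrable M S" unfolding S_def by (rule Bochner_Integration.integrable_sum) (use Ele in auto)
  have ES: "P.expectation S = real d * sqrt 2"
    unfolding S_def using Ele by (subst Bochner_Integration.integral_sum) auto
  have WS: "exp ((Y \<omega>)\<^sup>2/4) \<le> S \<omega>" for \<omega>
  proof -
    obtain j where j: "j < d" "Y \<omega> = X j \<omega>" using Yin by blast
    have "exp ((X j \<omega>)\<^sup>2/4) \<le> S \<omega>" unfolding S_def
      using j(1) by (intro member_le_sum) auto
    then show ?thesis using j by simp
  qed
  have Wint: "integrable M (\<lambda>\<omega>. exp ((Y \<omega>)\<^sup>2/4))"
    by (rule Bochner_Integration.integrable_bound[OF Sint]) (use WS in \<open>auto intro!: AE_I2 simp: order_trans[OF _ WS]\<close>)
  have ZW: "(Y \<omega>)\<^sup>2 \<le> 4 * exp ((Y \<omega>)\<^sup>2/4)" for \<omega>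
    using exp_ge_add_one_self[of "(Y \<omega>)\<^sup>2/4"] by linarith
  have Zint: "integrable M (\<lambda>\<omega>. (Y \<omega>)\<^sup>2)"
    by (rule Bochner_Integration.integrable_bound[OF integrable_mult_right[OF Wint, of 4]]) (use ZW in \<open>auto intro!: AE_I2\<close>)
  have EW: "P.expectation (\<lambda>\<omega>. exp ((Y \<omega>)\<^sup>2/4)) \<le> real d * sqrt 2"
    using Bochner_Integration.integral_mono[OF Wint Sint WS] ES by simp
  define m where "m = P.expectation (\<lambda>\<omega>. (Y \<omega>)\<^sup>2) / 4"
  have tang: "exp m * (1 - m) + (exp m / 4) * (Y \<omega>)\<^sup>2 \<le> exp ((Y \<omega>)\<^sup>2/4)" for \<omega>
  proof -
    have "exp ((Y \<omega>)\<^sup>2/4) = exp m * exp ((Y \<omega>)\<^sup>2/4 - m)" by (simp add: exp_diff)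
    also have "\<dots> \<ge> exp m * (1 + ((Y \<omega>)\<^sup>2/4 - m))"
      by (intro mult_left_mono exp_ge_add_one_self) auto
    finally show ?thesis by (simp add: algebra_simps)
  qed
  have "P.expectation (\<lambda>\<omega>. exp m * (1 - m) + (exp m / 4) * (Y \<omega>)\<^sup>2) = exp m * (1 - m) + (exp m / 4) * (4 * m)"
    using Zint by (simp add: m_def P.prob_space)
  also have "\<dots> = exp m" by (simp add: algebra_simps)
  finally have Eeq: "P.expectation (\<lambda>\<omega>. exp m * (1 - m) + (exp m / 4) * (Y \<omega>)\<^sup>2) = exp m" .
  have "P.expectation (\<lambda>\<omega>. exp m * (1 - m) + (exp m / 4) * (Y \<omega>)\<^sup>2) \<le> P.expectation (\<lambda>\<omega>. exp ((Y \<omega>)\<^sup>2/4))"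
  proof -
    have "integrable M (\<lambda>\<omega>. exp m * (1 - m) + (exp m / 4) * (Y \<omega>)\<^sup>2)"
      by (intro Bochner_Integration.integrable_add integrable_mult_right Zint) (auto simp: P.emeasure_space_1)
    then show "P.expectation (\<lambda>\<omega>. exp m * (1 - m) + (exp m / 4) * (Y \<omega>)\<^sup>2) \<le> P.expectation (\<lambda>\<omega>. exp ((Y \<omega>)\<^sup>2/4))"
      by (rule Bochner_Integration.integral_mono[OF _ Wint tang])
  qed
  with EW Eeq have "exp m \<le> real d * sqrt 2" by linarith
  then have "m \<le> ln (real d * sqrt 2)" using d0 by (subst ln_ge_iff) auto
  also have "\<dots> = ln (real d) + ln 2 / 2" using d0 by (simp add: ln_mult ln_sqrt)
  finally have mle: "m \<le> ln (real d) + ln 2 / 2" .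
  have "ln 2 \<le> ln (real d)" using assms(2) by simp
  with mle have part1: "P.expectation (\<lambda>\<omega>. (Y \<omega>)\<^sup>2) \<le> 6 * ln (real d)"
    unfolding m_def by simp
  define c where "c = P.expectation Y"
  have Vint: "integrable M (\<lambda>\<omega>. (Y \<omega> - c)\<^sup>2)"
  proof (rule Bochner_Integration.integrable_bound)
    show "integrable M (\<lambda>\<omega>. 2 * (Y \<omega>)\<^sup>2 + 2 * c\<^sup>2)" using Zint by auto
    show "AE \<omega> in M. norm ((Y \<omega> - c)\<^sup>2) \<le> norm (2 * (Y \<omega>)\<^sup>2 + 2 * c\<^sup>2)"
    proof (intro AE_I2)
      fix \<omega>
      have "0 \<le> (Y \<omega> + c)\<^sup>2" by simp
      then have "(Y \<omega> - c)\<^sup>2 \<le> 2 * (Y \<omega>)\<^sup>2 + 2 * c\<^sup>2"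
        by (simp add: power2_eq_square algebra_simps)
      then show "norm ((Y \<omega> - c)\<^sup>2) \<le> norm (2 * (Y \<omega>)\<^sup>2 + 2 * c\<^sup>2)"
        by simp
    qed
  qed simp
  define a where "a = 2 * sqrt (ln (3 * real d))"
  have L0: "0 \<le> ln (3 * real d)" using d0 by simp
  have a0: "0 \<le> a" unfolding a_def using L0 by simp
  define A where "A = {\<omega>\<in>space M. a + 1 \<le> Y \<omega>}"
  define B where "B = {\<omega>\<in>space M. Y \<omega> \<le> a}"
  have Aev: "A \<in> P.events" unfolding A_def by measurable
  have Bev: "B \<in> P.events" unfolding B_def by measurable
  have PB: "1/2 \<le> P.prob B"
  proof -
    have sub: "space M - B \<subseteq> {\<omega>\<in>space M. 3 * real d \<le> S \<omega>}"
    proof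
      fix \<omega> assume "\<omega> \<in> space M - B"
      then have w: "\<omega> \<in> space M" "a < Y \<omega>" unfolding B_def by auto
      have "a\<^sup>2 \<le> (Y \<omega>)\<^sup>2" using w a0 by (intro power_mono) auto
      moreover have "a\<^sup>2 = 4 * ln (3 * real d)" unfolding a_def using L0 by (simp add: power_mult_distrib)
      ultimately have "ln (3 * real d) \<le> (Y \<omega>)\<^sup>2/4" by simp
      then have "exp (ln (3 * real d)) \<le> exp ((Y \<omega>)\<^sup>2/4)" by simp
      then have "3 * real d \<le> exp ((Y \<omega>)\<^sup>2/4)" using d0 by simp
      then show "\<omega> \<in> {\<omega>\<in>space M. 3 * real d \<le> S \<omega>}" using WS[of \<omega>] w by auto
    qed
    have Snn: "AE \<omega> in M. 0 \<le> S \<omega>" unfolding S_def by (auto intro!: AE_I2 sum_nonneg)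
    have "P.prob {\<omega>\<in>space M. 3 * real d \<le> S \<omega>} \<le> P.expectation S / (3 * real d)"
      by (rule integral_Markov_inequality_measure[OF Sint _ Snn]) (use d0 in auto)
    also have "\<dots> = sqrt 2 / 3" using ES d0 by simp
    also have "\<dots> \<le> 1/2"
    proof -
      have "sqrt 2 \<le> sqrt (9/4)" by simp
      also have "sqrt (9/4) = 3/2" by (simp add: real_sqrt_divide)
      finally show ?thesis by simp
    qed
    moreover have "{\<omega>\<in>space M. 3 * real d \<le> S \<omega>} \<in> P.events"
      using borel_measurable_integrable[OF Sint] by measurable
    ultimately have "P.prob (space M - B) \<le> 1/2"
      using P.finite_measure_mono[OF sub] by simp
    then show ?thesis using P.prob_compl[OF Bev] by simp
  qed
  have PA: "normal_density 0 1 (a+2) \<le> P.prob A"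
  proof -
    have "normal_density 0 1 (a+2) \<le> measure (density lborel (normal_density 0 1)) {a+1..a+1+1}"
      using dens_lower[of "a+1"] a0 by (simp add: add.assoc)
    also have "\<dots> = measure (distr M borel (X 0)) {a+1..a+1+1}"
      using marg[OF assms(3,4) d0] by simp
    also have "\<dots> = P.prob (X 0 -` {a+1..a+1+1} \<inter> space M)"
      using Xm[OF d0] by (subst measure_distr) auto
    also have "\<dots> \<le> P.prob A"
      using Yge[OF d0] by (intro P.finite_measure_mono Aev) (auto simp: A_def intro: order_trans)
    finally show ?thesis .
  qed
  have var: "min (P.prob A) (P.prob B) / 4 \<le> P.expectation (\<lambda>\<omega>. (Y \<omega> - c)\<^sup>2)"
  proof (cases "c \<le> a + 1/2")
    case True
    have "\<And>\<omega>. \<omega> \<in> space M \<Longrightarrow> (1/4) * indicator A \<omega> \<le> (Y \<omega> - c)\<^sup>2"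
    proof -
      fix \<omega> assume "\<omega> \<in> space M"
      show "(1/4) * indicator A \<omega> \<le> (Y \<omega> - c)\<^sup>2"
      proof (cases "\<omega> \<in> A")
        case True
        then have "1/2 \<le> Y \<omega> - c" using \<open>c \<le> a + 1/2\<close> by (auto simp: A_def)
        then have "(1/2)\<^sup>2 \<le> (Y \<omega> - c)\<^sup>2" by (intro power_mono) auto
        then show ?thesis using True by (simp add: power2_eq_square)
      qed simp
    qed
    then have "P.expectation (\<lambda>\<omega>. (1/4) * indicator A \<omega>) \<le> P.expectation (\<lambda>\<omega>. (Y \<omega> - c)\<^sup>2)"
      by (intro Bochner_Integration.integral_mono Vint integrable_mult_right integrable_real_indicator Aev) (auto simp: P.emeasure_eq_measure)
    moreover have "P.expectation (\<lambda>\<omega>. (1/4) * indicator A \<omega>) = P.prob A / 4"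
      using Aev by (simp add: Int_absorb2 sets.sets_into_space)
    ultimately show ?thesis by simp
  next
    case False
    have "\<And>\<omega>. \<omega> \<in> space M \<Longrightarrow> (1/4) * indicator B \<omega> \<le> (Y \<omega> - c)\<^sup>2"
    proof -
      fix \<omega> assume "\<omega> \<in> space M"
      show "(1/4) * indicator B \<omega> \<le> (Y \<omega> - c)\<^sup>2"
      proof (cases "\<omega> \<in> B")
        case True
        then have "1/2 \<le> c - Y \<omega>" using \<open>\<not> c \<le> a + 1/2\<close> by (auto simp: B_def)
        then have "(1/2)\<^sup>2 \<le> (c - Y \<omega>)\<^sup>2" by (intro power_mono) auto
        then show ?thesis using True by (simp add: power2_eq_square algebra_simps)
      qed simp
    qed
    then have "P.expectation (\<lambda>\<omega>. (1/4) * indicator B \<omega>) \<le> P.expectation (\<lambda>\<omega>. (Y \<omega> - c)\<^sup>2)"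
      by (intro Bochner_Integration.integral_mono Vint integrable_mult_right integrable_real_indicator Bev) (auto simp: P.emeasure_eq_measure)
    moreover have "P.expectation (\<lambda>\<omega>. (1/4) * indicator B \<omega>) = P.prob B / 4"
      using Bev by (simp add: Int_absorb2 sets.sets_into_space)
    ultimately show ?thesis by simp
  qed
  have part2: "real d powr (-15) / sqrt (2 * pi) \<le> P.expectation (\<lambda>\<omega>. (Y \<omega> - c)\<^sup>2)"
  proof -
    have "real d powr (-15) / sqrt (2 * pi) \<le> min (P.prob A) (P.prob B) / 4"
    proof -
      have f1: "real d powr (-15) / sqrt (2 * pi) \<le> (1/4) * normal_density 0 1 (a+2)"
        using arith_final(1)[OF assms(2)] unfolding a_def .
      have f2: "real d powr (-15) / sqrt (2 * pi) \<le> 1/8" by (rule arith_final(2)[OF assms(2)])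
      show ?thesis by (rule min_helper[OF f1 f2 PA PB])
    qed
    then show ?thesis using var by (rule order_trans)
  qed
  have p2: "real d powr (-15) / sqrt (2 * pi) \<le> P.expectation (\<lambda>\<omega>. (Y \<omega> - P.expectation Y)\<^sup>2)"
    using part2 unfolding c_def .
  have Yw: "\<And>\<omega>. Max ((\<lambda>i. X i \<omega>) ` {..<d}) = Y \<omega>" by (simp add: Y_def)
  have e1: "P.expectation (\<lambda>\<omega>. (Max ((\<lambda>i. X i \<omega>) ` {..<d}))\<^sup>2) = P.expectation (\<lambda>\<omega>. (Y \<omega>)\<^sup>2)"
    unfolding Y_def ..
  have e2: "P.variance (\<lambda>\<omega>. Max ((\<lambda>i. X i \<omega>) ` {..<d})) = P.expectation (\<lambda>\<omega>. (Y \<omega> - P.expectation Y)\<^sup>2)"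
    unfolding Y_def ..
  have r1: "P.expectation (\<lambda>\<omega>. (Max ((\<lambda>i. X i \<omega>) ` {..<d}))\<^sup>2) \<le> 6 * ln (real d)"
    unfolding e1 by (rule part1)
  have r2: "P.variance (\<lambda>\<omega>. Max ((\<lambda>i. X i \<omega>) ` {..<d})) \<ge> real d powr (-15) / sqrt (2 * pi)"
    unfolding e2 by (rule p2)
  show ?thesis by (rule conjI[OF r1 r2])
qed

end
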